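(* Let $\mathcal{B}$ be a real Banach space with dual $\mathcal{B}^*$, let $\nu_j\in\mathcal{B}^*$, $j\in\mathbb{N}_m$, be linearly independent and let $\mathbf{y}\in\mathbb{R}^m$. Then $\hat f\in\mathcal{B}$ is a solution of the minimum norm interpolation problem with data $\mathbf{y}$ if and only if $\hat f\in\mathcal{M}_{\mathbf{y}}$ and there exist $c_j\in\mathbb{R}$, $j\in\mathbb{N}_m$, such that $$\hat f\in\gamma\,\partial\|\cdot\|_{\mathcal{B}^*}\Big(\sum_{j\in\mathbb{N}_m}c_j\nu_j\Big),\qquad \gamma:=\Big\|\sum_{j\in\mathbb{N}_m}c_j\nu_j\Big\|_{\mathcal{B}^*},$$ where $\hat f$ is identified with its canonical image in $\mathcal{B}^{**}$.
   Context: $\mathcal{B}$ is a real Banach space with dual $\mathcal{B}^*$ and pairing $\langle\nu,f\rangle_{\mathcal{B}}:=\nu(f)$; $\mathbb{N}_m:=\{1,\dots,m\}$; $\mathcal{L}(f):=[\langle\nu_j,f\rangle_{\mathcal{B}}:j\in\mathbb{N}_m]$, $\mathcal{M}_{\mathbf{y}}:=\{f\in\mathcal{B}:\mathcal{L}(f)=\mathbf{y}\}$; a solution of the minimum norm interpolation problem with data $\mathbf{y}$ is an $\hat f\in\mathcal{M}_{\mathbf{y}}$ with $\|\hat f\|_{\mathcal{B}}=\inf\{\|f\|_{\mathcal{B}}:f\in\mathcal{M}_{\mathbf{y}}\}$. For a convex $\phi$ on a real normed space $X$, $\partial\phi(f):=\{\nu\in X^*:\phi(g)-\phi(f)\ge\nu(g-f)\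 \forall g\in X\}$; so $\partial\|\cdot\|_{\mathcal{B}^*}(\nu)\subseteq\mathcal{B}^{**}$. *)

theory Defs
  imports "HOL-Analysis.Analysis"
begin

definition subdifferential :: "('b::real_normed_vector \<Rightarrow> real) \<Rightarrow> 'b \<Rightarrow> ('b \<Rightarrow>\<^sub>L real) set" where
  "subdifferential phi f = {nu. \<forall>g. phi g - phi f \<ge> blinfun_apply nu (g - f)}"

definition canon_embed :: "'a::real_normed_vector \<Rightarrow> (('a \<Rightarrow>\<^sub>L real) \<Rightarrow>\<^sub>L real)" where
  "canon_embed f = Blinfun (\<lambda>nu. blinfun_apply nu f)"

definition interp_set :: "nat \<Rightarrow> (nat \<Rightarrow> ('a::real_normed_vector \<Rightarrow>\<^sub>L real)) \<Rightarrow> (nat \<Rightarrow> real) \<Rightarrow> 'a set" where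
  "interp_set m nu y = {f. \<forall>j\<in>{1..m}. blinfun_apply (nu j) f = y j}"

definition is_mni_solution :: "nat \<Rightarrow> (nat \<Rightarrow> ('a::real_normed_vector \<Rightarrow>\<^sub>L real)) \<Rightarrow> (nat \<Rightarrow> real) \<Rightarrow> 'a \<Rightarrow> bool" where
  "is_mni_solution m nu y f \<longleftrightarrow>
     f \<in> interp_set m nu y \<and> norm f = Inf (norm ` interp_set m nu y)"

end

theory Submission
  imports Defs
begin


lemma hb_extend:
  fixes p :: "'a::real_vector \<Rightarrow> real"
  assumes sub: "\<And>x y. p (x + y) \<le> p x + p y" and hom: "\<And>x r. 0 \<le> r \<Longrightarrow> p (r *\<^sub>R x) = r * p x"
    and lin: "\<And>x a y b r s. (x,a)\<in>M \<Longrightarrow> (y,b)\<in>M \<Longrightarrow> (r*\<^sub>R x + s*\<^sub>R y, r*a + s*b) \<in> M"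
    and dom: "\<And>x a. (x,a)\<in>M \<Longrightarrow> a \<le> p x"
    and ne: "(x0,a0) \<in> M"
  shows "\<exists>c. \<forall>x a t. (x,a)\<in>M \<longrightarrow> a + t * c \<le> p (x + t *\<^sub>R z)"
proof -
  define L where "L = {a - p (u - z) | u a. (u,a)\<in>M}"
  have key: "a - p (u - z) \<le> p (w + z) - b" if "(u,a)\<in>M" "(w,b)\<in>M" for u a w b
  proof -
    have "(1 *\<^sub>R u + 1 *\<^sub>R w, 1*a + 1*b) \<in> M" using lin that by blast
    then have "a + b \<le> p (u + w)" using dom by simp
    also have "p (u + w) = p ((u - z) + (w + z))" by (simp add: algebra_simps)
    also have "\<dots> \<le> p (u - z) + p (w + z)" by (rule sub)
    finally show ?thesis by simp
  qed
  have Lne: "L \<noteq> {}" using ne unfolding L_def by blast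
  have Lbdd: "bdd_above L" unfolding L_def bdd_above_def
    using key[OF _ ne] by blast
  define c where "c = Sup L"
  have c1: "a - p (u - z) \<le> c" if "(u,a)\<in>M" for u a
    unfolding c_def by (rule cSup_upper[OF _ Lbdd]) (use that L_def in blast)
  have c2: "c \<le> p (w + z) - b" if "(w,b)\<in>M" for w b
    unfolding c_def by (rule cSup_least[OF Lne]) (use key that L_def in blast)
  have "a + t * c \<le> p (x + t *\<^sub>R z)" if xa: "(x,a)\<in>M" for x a t
  proof (cases "t = 0")
    case True then show ?thesis using dom xa by simp
  next
    case False
    show ?thesis
    proof (cases "t > 0")
      case True
      have m: "((1/t) *\<^sub>R x + 0 *\<^sub>R x, (1/t)*a + 0*a) \<in> M" using lin xa by blast
      have "c \<le> p ((1/t) *\<^sub>R x + z) - a/t" using c2[OF m[simplified]] by simp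
      then have "t * c \<le> t * p ((1/t) *\<^sub>R x + z) - a" using True
        by (simp add: field_simps)
      also have "t * p ((1/t) *\<^sub>R x + z) = p (t *\<^sub>R ((1/t) *\<^sub>R x + z))"
        using hom True by simp
      also have "t *\<^sub>R ((1/t) *\<^sub>R x + z) = x + t *\<^sub>R z" using True
        by (simp add: scaleR_add_right)
      finally show ?thesis by simp
    next
      case False2: False
      then have tn: "-t > 0" using False by simp
      have m: "((1/-t) *\<^sub>R x + 0 *\<^sub>R x, (1/-t)*a + 0*a) \<in> M" using lin xa by blast
      have "a/(-t) - p ((1/-t) *\<^sub>R x - z) \<le> c" using c1[OF m[simplified]] by simp
      then have "a - (-t) * p ((1/-t) *\<^sub>R x - z) \<le> (-t) * c" using tn
        by (simp add: field_simps)
      also have "(-t) * p ((1/-t) *\<^sub>R x - z) = p ((-t) *\<^sub>R ((1/-t) *\<^sub>R x - z))"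
        by (rule hom[OF less_imp_le[OF tn], symmetric])
      also have "(-t) *\<^sub>R ((1/-t) *\<^sub>R x - z) = x + t *\<^sub>R z" using tn
        by (simp add: scaleR_diff_right)
      finally show ?thesis by simp
    qed
  qed
  then show ?thesis by blast
qed

lemma hahn_banach:
  fixes p :: "'a::real_vector \<Rightarrow> real"
  assumes sub: "\<And>x y. p (x + y) \<le> p x + p y" and hom: "\<And>x r. 0 \<le> r \<Longrightarrow> p (r *\<^sub>R x) = r * p x"
  shows "\<exists>\<phi>. linear \<phi> \<and> (\<forall>x. \<phi> x \<le> p x) \<and> \<phi> x0 = p x0"
proof -
  have p0: "p 0 = 0" using hom[of 0 0] by simp
  define good where "good G \<longleftrightarrow> (x0, p x0) \<in> G \<and>
     (\<forall>x a y b r s. (x,a)\<in>G \<longrightarrow> (y,b)\<in>G \<longrightarrow> (r*\<^sub>R x + s*\<^sub>R y, r*a + s*b) \<in> G) \<and>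
     (\<forall>x a. (x,a)\<in>G \<longrightarrow> a \<le> p x)" for G
  define A where "A = Collect good"
  define G0 where "G0 = {(t *\<^sub>R x0, t * p x0) | t. True}"
  have pn: "- p x0 \<le> p (- x0)"
    using sub[of x0 "-x0"] p0 by simp
  have "good G0" unfolding good_def G0_def
  proof (intro conjI allI impI)
    show "(x0, p x0) \<in> {(t *\<^sub>R x0, t * p x0) |t. True}"
      by (rule CollectI, rule exI[of _ 1]) simp
  next
    fix x a y b r s assume "(x,a) \<in> {(t *\<^sub>R x0, t * p x0) |t. True}" "(y,b) \<in> {(t *\<^sub>R x0, t * p x0) |t. True}"
    then obtain t1 t2 where "x = t1 *\<^sub>R x0" "a = t1 * p x0" "y = t2 *\<^sub>R x0" "b = t2 * p x0" by auto
    then show "(r *\<^sub>R x + s *\<^sub>R y, r * a + s * b) \<in> {(t *\<^sub>R x0, t * p x0) |t. True}"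
      by (intro CollectI exI[of _ "r*t1 + s*t2"]) (simp add: algebra_simps)
  next
    fix x a assume "(x,a) \<in> {(t *\<^sub>R x0, t * p x0) |t. True}"
    then obtain t where t: "x = t *\<^sub>R x0" "a = t * p x0" by auto
    show "a \<le> p x"
    proof (cases "t \<ge> 0")
      case True then show ?thesis using t hom by simp
    next
      case False
      then have "p x = (-t) * p (- x0)" using t hom[of "-t" "-x0"] by simp
      moreover have "(-t) * (- p x0) \<le> (-t) * p (- x0)" using False pn
        by (intro mult_left_mono) auto
      ultimately show ?thesis using t by simp
    qed
  qed
  then have Ane: "A \<noteq> {}" unfolding A_def by blast
  have ch: "\<Union>C \<in> A" if Cne: "C \<noteq> {}" and chn: "subset.chain A C" for C
  proof -
    have CA: "C \<subseteq> A" and tot: "\<And>X Y. X\<in>C \<Longrightarrow> Y\<in>C \<Longrightarrow> X \<subseteq> Y \<or> Y \<subseteq> X"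
      using chn unfolding subset.chain_def by auto
    have g: "good X" if "X \<in> C" for X using CA that A_def by auto
    show ?thesis unfolding A_def good_def
    proof (intro CollectI conjI allI impI)
      obtain X where "X \<in> C" using Cne by blast
      then have "(x0, p x0) \<in> X" using g unfolding good_def by blast
      then show "(x0, p x0) \<in> \<Union>C" using \<open>X \<in> C\<close> by blast
    next
      fix x a y b r s assume "(x,a) \<in> \<Union>C" "(y,b) \<in> \<Union>C"
      then obtain X Y where X: "X\<in>C" "(x,a)\<in>X" and Y: "Y\<in>C" "(y,b)\<in>Y" by auto
      show "(r *\<^sub>R x + s *\<^sub>R y, r * a + s * b) \<in> \<Union>C"
      proof (cases "X \<subseteq> Y")
        case True
        have "\<forall>x a y b r s. (x,a)\<in>Y \<longrightarrow> (y,b)\<in>Y \<longrightarrow> (r*\<^sub>R x + s*\<^sub>R y, r*a + s*b) \<in> Y"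
          using g[OF Y(1)] unfolding good_def by blast
        then have "(r *\<^sub>R x + s *\<^sub>R y, r * a + s * b) \<in> Y" using True X Y by blast
        then show ?thesis using Y by blast
      next
        case False
        then have "Y \<subseteq> X" using tot X Y by blast
        have "\<forall>x a y b r s. (x,a)\<in>X \<longrightarrow> (y,b)\<in>X \<longrightarrow> (r*\<^sub>R x + s*\<^sub>R y, r*a + s*b) \<in> X"
          using g[OF X(1)] unfolding good_def by blast
        then have "(r *\<^sub>R x + s *\<^sub>R y, r * a + s * b) \<in> X" using \<open>Y \<subseteq> X\<close> X Y by blast
        then show ?thesis using X by blast
      qed
    next
      fix x a assume "(x,a) \<in> \<Union>C"
      then obtain X where "X \<in> C" "(x,a) \<in> X" by blast
      then show "a \<le> p x" using g[OF \<open>X \<in> C\<close>] unfolding good_def by blast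
    qed
  qed
  obtain M where MA: "M \<in> A" and Mmax: "\<And>X. X \<in> A \<Longrightarrow> M \<subseteq> X \<Longrightarrow> X = M"
    using subset_Zorn_nonempty[OF Ane ch] by blast
  have gM: "good M" using MA A_def by simp
  have lin: "\<And>x a y b r s. (x,a)\<in>M \<Longrightarrow> (y,b)\<in>M \<Longrightarrow> (r*\<^sub>R x + s*\<^sub>R y, r*a + s*b) \<in> M"
    and dom: "\<And>x a. (x,a)\<in>M \<Longrightarrow> a \<le> p x" and x0M: "(x0, p x0) \<in> M"
    using gM unfolding good_def by blast+
  have uniq: "a = b" if "(x,a)\<in>M" "(x,b)\<in>M" for x a b
  proof -
    have "(1 *\<^sub>R x + (-1) *\<^sub>R x, 1*a + (-1)*b) \<in> M" by (rule lin[OF that])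
    then have "(0, a - b) \<in> M" by simp
    then have "a - b \<le> 0" using dom[of 0 "a-b"] p0 by simp
    moreover have "((-1) *\<^sub>R x + 1 *\<^sub>R x, (-1)*a + 1*b) \<in> M" by (rule lin[OF that])
    then have "(0, b - a) \<in> M" by simp
    then have "b - a \<le> 0" using dom[of 0 "b-a"] p0 by simp
    ultimately show ?thesis by simp
  qed
  have total: "\<exists>a. (z,a) \<in> M" for z
  proof (rule ccontr)
    assume nz: "\<not> (\<exists>a. (z,a) \<in> M)"
    obtain c where c: "\<And>x a t. (x,a)\<in>M \<Longrightarrow> a + t * c \<le> p (x + t *\<^sub>R z)"
      using hb_extend[OF sub hom lin dom x0M, of z] by blast
    define G where "G = {(x + t *\<^sub>R z, a + t * c) | x a t. (x,a)\<in>M}"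
    have "good G" unfolding good_def
    proof (intro conjI allI impI)
      show "(x0, p x0) \<in> G" unfolding G_def using x0M by force
    next
      fix x a y b r s assume "(x,a) \<in> G" "(y,b) \<in> G"
      then obtain x1 a1 t1 x2 a2 t2 where h: "(x1,a1)\<in>M" "x = x1 + t1 *\<^sub>R z" "a = a1 + t1 * c"
        "(x2,a2)\<in>M" "y = x2 + t2 *\<^sub>R z" "b = a2 + t2 * c" unfolding G_def by blast
      have "(r *\<^sub>R x1 + s *\<^sub>R x2, r*a1 + s*a2) \<in> M" using lin h by blast
      moreover have "r *\<^sub>R x + s *\<^sub>R y = (r *\<^sub>R x1 + s *\<^sub>R x2) + (r*t1 + s*t2) *\<^sub>R z"
        using h by (simp add: algebra_simps)
      moreover have "r * a + s * b = (r*a1 + s*a2) + (r*t1 + s*t2) * c"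
        using h by (simp add: algebra_simps)
      ultimately show "(r *\<^sub>R x + s *\<^sub>R y, r * a + s * b) \<in> G" unfolding G_def by blast
    next
      fix x a assume "(x,a) \<in> G"
      then show "a \<le> p x" unfolding G_def using c by blast
    qed
    moreover have "M \<subseteq> G"
    proof
      fix q assume "q \<in> M"
      obtain x a where q: "q = (x,a)" by (cases q)
      have "(x + 0 *\<^sub>R z, a + 0 * c) \<in> G" unfolding G_def using \<open>q \<in> M\<close> q by blast
      then show "q \<in> G" using q by simp
    qed
    ultimately have "G = M" using Mmax unfolding A_def by simp
    moreover have "(z, c) \<in> G"
    proof -
      have "(0 *\<^sub>R x0 + 0 *\<^sub>R x0, 0 * p x0 + 0 * p x0) \<in> M" by (rule lin[OF x0M x0M])
      then have "(0, 0) \<in> M" by simp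
      then have "(0 + 1 *\<^sub>R z, 0 + 1 * c) \<in> G" unfolding G_def by blast
      then show ?thesis by simp
    qed
    ultimately show False using nz by blast
  qed
  define \<phi> where "\<phi> x = (THE a. (x,a) \<in> M)" for x
  have phiM: "(x, \<phi> x) \<in> M" for x
  proof -
    obtain a where a: "(x,a) \<in> M" using total by blast
    have "(THE a. (x,a) \<in> M) = a" using uniq a by (intro the_equality) blast+
    then show ?thesis unfolding \<phi>_def using a by simp
  qed
  have phi_eq: "\<phi> x = a" if "(x,a)\<in>M" for x a using uniq phiM that by blast
  have "linear \<phi>"
  proof (rule linearI)
    fix x y show "\<phi> (x + y) = \<phi> x + \<phi> y"
      using phi_eq[OF lin[OF phiM phiM, of 1 x 1 y]] by simp
  next
    fix r x show "\<phi> (r *\<^sub>R x) = r *\<^sub>R \<phi> x"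
      using phi_eq[OF lin[OF phiM phiM, of r x 0 x]] by simp
  qed
  moreover have "\<forall>x. \<phi> x \<le> p x" using dom phiM by blast
  moreover have "\<phi> x0 = p x0" using phi_eq[OF x0M] .
  ultimately show ?thesis by blast
qed



lemma dual_basis:
  fixes S :: "('a::real_normed_vector \<Rightarrow>\<^sub>L real) set"
  assumes "finite S" "independent S"
  shows "\<exists>e. \<forall>\<mu>\<in>S. \<forall>\<nu>\<in>S. blinfun_apply \<mu> (e \<nu>) = (if \<mu> = \<nu> then 1 else 0)"
  using assms
proof (induction S rule: finite_induct)
  case empty then show ?case by simp
next
  case (insert n0 S)
  have indS: "independent S" and nsp: "n0 \<notin> span S"
    using insert.prems insert.hyps(2) by (auto simp: independent_insert)
  obtain e where e: "\<And>\<mu> \<nu>. \<mu>\<in>S \<Longrightarrow> \<nu>\<in>S \<Longrightarrow> blinfun_apply \<mu> (e \<nu>) = (if \<mu> = \<nu> then 1 else 0)"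
    using insert.IH[OF indS] by blast
  define \<psi> where "\<psi> = n0 - (\<Sum>\<mu>\<in>S. blinfun_apply n0 (e \<mu>) *\<^sub>R \<mu>)"
  have "\<psi> \<noteq> 0"
  proof
    assume "\<psi> = 0"
    then have "n0 = (\<Sum>\<mu>\<in>S. blinfun_apply n0 (e \<mu>) *\<^sub>R \<mu>)" unfolding \<psi>_def by simp
    moreover have "(\<Sum>\<mu>\<in>S. blinfun_apply n0 (e \<mu>) *\<^sub>R \<mu>) \<in> span S"
      by (intro span_sum span_scale span_base)
    ultimately show False using nsp by simp
  qed
  then obtain x where x: "blinfun_apply \<psi> x \<noteq> 0"
    by (metis blinfun_eqI zero_blinfun.rep_eq)
  define x' where "x' = x - (\<Sum>\<mu>\<in>S. blinfun_apply \<mu> x *\<^sub>R e \<mu>)"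
  have x'S: "blinfun_apply \<mu>' x' = 0" if "\<mu>' \<in> S" for \<mu>'
  proof -
    have "(\<Sum>\<mu>\<in>S. blinfun_apply \<mu> x * blinfun_apply \<mu>' (e \<mu>)) = (\<Sum>\<mu>\<in>S. if \<mu> = \<mu>' then blinfun_apply \<mu> x else 0)"
      using e[OF that] by (intro sum.cong) auto
    also have "\<dots> = blinfun_apply \<mu>' x" using that insert.hyps(1) by simp
    finally show ?thesis unfolding x'_def by (simp add: blinfun.diff_right blinfun.sum_right blinfun.scaleR_right)
  qed
  have x'0: "blinfun_apply n0 x' = blinfun_apply \<psi> x"
    unfolding x'_def \<psi>_def
    by (simp add: blinfun.diff_right blinfun.sum_right blinfun.scaleR_right blinfun.diff_left blinfun.sum_left blinfun.scaleR_left mult.commute)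
  define e0 where "e0 = (1 / blinfun_apply \<psi> x) *\<^sub>R x'"
  have e0S: "blinfun_apply \<mu> e0 = 0" if "\<mu> \<in> S" for \<mu>
    unfolding e0_def using x'S[OF that] by (simp add: blinfun.scaleR_right)
  have e00: "blinfun_apply n0 e0 = 1"
    unfolding e0_def using x'0 x by (simp add: blinfun.scaleR_right)
  define e' where "e' \<nu> = (if \<nu> = n0 then e0 else e \<nu> - blinfun_apply n0 (e \<nu>) *\<^sub>R e0)" for \<nu>
  have "blinfun_apply \<mu> (e' \<nu>) = (if \<mu> = \<nu> then 1 else 0)" if mn: "\<mu> \<in> insert n0 S" "\<nu> \<in> insert n0 S" for \<mu> \<nu>
  proof -
    consider "\<mu> = n0" "\<nu> = n0" | "\<mu> \<in> S" "\<nu> = n0" | "\<mu> = n0" "\<nu> \<in> S" | "\<mu> \<in> S" "\<nu> \<in> S"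
      using mn by blast
    then show ?thesis
    proof cases
      case 1 then show ?thesis using e00 e'_def by simp
    next
      case 2 then show ?thesis using e0S insert.hyps(2) e'_def by auto
    next
      case 3 then show ?thesis using e00 insert.hyps(2) e'_def
        by (auto simp: blinfun.diff_right blinfun.scaleR_right)
    next
      case 4 then show ?thesis using e0S e insert.hyps(2) e'_def
        by (auto simp: blinfun.diff_right blinfun.scaleR_right)
    qed
  qed
  then show ?case by blast
qed



lemma canon_apply: "blinfun_apply (canon_embed f) g = blinfun_apply g f"
  unfolding canon_embed_def
  by (simp add: bounded_linear_Blinfun_apply[OF blinfun.bounded_linear_left])

lemma norming:
  fixes f :: "'a::real_normed_vector"
  shows "\<exists>\<psi>::'a \<Rightarrow>\<^sub>L real. norm \<psi> \<le> 1 \<and> blinfun_apply \<psi> f = norm f"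
proof -
  obtain \<phi> where lin: "linear \<phi>" and le: "\<And>x. \<phi> x \<le> norm x" and ff: "\<phi> f = norm f"
    using hahn_banach[of norm f] norm_triangle_ineq by fastforce
  have ab: "\<bar>\<phi> x\<bar> \<le> norm x" for x
  proof -
    have "\<phi> (-x) = - \<phi> x" using lin by (simp add: linear_neg)
    then show ?thesis using le[of x] le[of "-x"] by simp
  qed
  have bl: "bounded_linear \<phi>"
    by (rule bounded_linear_intro[where K=1])
      (use lin ab in \<open>auto simp: linear_add linear_scale\<close>)
  show ?thesis
    apply (rule exI[of _ "Blinfun \<phi>"])
    using ab ff bl by (auto simp: bounded_linear_Blinfun_apply intro!: norm_blinfun_bound)
qed

lemma backward:
  fixes nu :: "nat \<Rightarrow> ('a::banach \<Rightarrow>\<^sub>L real)" and f :: 'a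
  assumes fM: "f \<in> interp_set m nu y"
    and Phi: "\<Phi> \<in> subdifferential norm (\<Sum>j=1..m. c j *\<^sub>R nu j)"
    and ce: "canon_embed f = norm (\<Sum>j=1..m. c j *\<^sub>R nu j) *\<^sub>R \<Phi>"
  shows "is_mni_solution m nu y f"
proof -
  define v where "v = (\<Sum>j=1..m. c j *\<^sub>R nu j)"
  define \<gamma> where "\<gamma> = norm v"
  have sd: "blinfun_apply \<Phi> (g - v) \<le> norm g - norm v" for g
    using Phi unfolding subdifferential_def v_def by simp
  have app: "blinfun_apply g f = \<gamma> * blinfun_apply \<Phi> g" for g
    using arg_cong[OF ce, of "\<lambda>F. blinfun_apply F g"] unfolding v_def[symmetric] \<gamma>_def[symmetric]
    by (simp add: canon_apply blinfun.scaleR_left)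
  have Phile: "blinfun_apply \<Phi> g \<le> norm g" for g
  proof -
    have "blinfun_apply \<Phi> g \<le> norm (g + v) - norm v" using sd[of "g + v"] by simp
    also have "\<dots> \<le> norm g" using norm_triangle_ineq[of g v] by simp
    finally show ?thesis .
  qed
  have Phiv: "\<gamma> \<le> blinfun_apply \<Phi> v" using sd[of 0] unfolding \<gamma>_def by (simp add: blinfun.minus_right)
  have g0: "0 \<le> \<gamma>" unfolding \<gamma>_def by simp
  obtain \<psi> :: "'a \<Rightarrow>\<^sub>L real" where psi: "norm \<psi> \<le> 1" "blinfun_apply \<psi> f = norm f"
    using norming by blast
  have nfg: "norm f \<le> \<gamma>"
  proof -
    have "norm f = \<gamma> * blinfun_apply \<Phi> \<psi>" using app psi by simp
    also have "\<dots> \<le> \<gamma> * 1" using Phile[of \<psi>] psi(1) g0 by (intro mult_left_mono) auto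
    finally show ?thesis by simp
  qed
  have min: "norm f \<le> norm h" if hM: "h \<in> interp_set m nu y" for h
  proof -
    have eq: "blinfun_apply v h = blinfun_apply v f"
      unfolding v_def using hM fM by (simp add: interp_set_def blinfun.sum_left blinfun.scaleR_left)
    have "\<gamma> * \<gamma> \<le> \<gamma> * blinfun_apply \<Phi> v" using Phiv g0 by (intro mult_left_mono)
    also have "\<dots> = blinfun_apply v f" using app by simp
    also have "\<dots> = blinfun_apply v h" using eq by simp
    also have "\<dots> \<le> \<gamma> * norm h" unfolding \<gamma>_def using norm_blinfun[of v h] by simp
    finally have "\<gamma> * \<gamma> \<le> \<gamma> * norm h" .
    then have "\<gamma> \<le> norm h \<or> \<gamma> = 0" using g0
      by (metis less_eq_real_def mult_le_cancel_left_pos)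
    then show ?thesis using nfg by auto
  qed
  have "Inf (norm ` interp_set m nu y) = norm f"
    by (rule cInf_eq_minimum) (use fM min in auto)
  then show ?thesis unfolding is_mni_solution_def using fM by simp
qed

lemma forward:
  fixes nu :: "nat \<Rightarrow> ('a::banach \<Rightarrow>\<^sub>L real)" and f :: 'a
  assumes inj: "inj_on nu {1..m}" and ind: "independent (nu ` {1..m})"
    and sol: "is_mni_solution m nu y f"
  shows "\<exists>c. canon_embed f \<in> (\<lambda>\<Phi>. norm (\<Sum>j=1..m. c j *\<^sub>R nu j) *\<^sub>R \<Phi>) ` subdifferential norm (\<Sum>j=1..m. c j *\<^sub>R nu j)"
proof -
  have fM: "f \<in> interp_set m nu y" and nf: "norm f = Inf (norm ` interp_set m nu y)"
    using sol unfolding is_mni_solution_def by auto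
  define S where "S g = interp_set m nu (\<lambda>j. blinfun_apply (nu j) g)" for g
  have Smem: "h \<in> S g \<longleftrightarrow> (\<forall>j\<in>{1..m}. blinfun_apply (nu j) h = blinfun_apply (nu j) g)" for h g
    unfolding S_def interp_set_def by simp
  define P where "P g = Inf (norm ` S g)" for g
  have gS: "g \<in> S g" for g using Smem by simp
  have bdd: "bdd_below (norm ` S g)" for g by (rule bdd_belowI[of _ 0]) auto
  have Plow: "P g \<le> norm h" if "h \<in> S g" for g h
    unfolding P_def by (rule cInf_lower) (use that bdd in auto)
  have Pge: "a \<le> P g" if "\<And>h. h \<in> S g \<Longrightarrow> a \<le> norm h" for a g
    unfolding P_def by (rule cInf_greatest) (use that gS in auto)
  have Pnn: "0 \<le> P g" for g by (rule Pge) simp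
  have Psub: "P (g1 + g2) \<le> P g1 + P g2" for g1 g2
  proof -
    have "P (g1 + g2) - norm h2 \<le> P g1" if h2: "h2 \<in> S g2" for h2
    proof (rule Pge)
      fix h1 assume h1: "h1 \<in> S g1"
      have "h1 + h2 \<in> S (g1 + g2)" using h1 h2 by (simp add: Smem blinfun.add_right)
      then have "P (g1 + g2) \<le> norm (h1 + h2)" by (rule Plow)
      also have "\<dots> \<le> norm h1 + norm h2" by (rule norm_triangle_ineq)
      finally show "P (g1 + g2) - norm h2 \<le> norm h1" by simp
    qed
    then have "P (g1 + g2) - P g1 \<le> P g2" by (intro Pge) force
    then show ?thesis by simp
  qed
  have P0: "P 0 = 0" using Plow[OF gS[of 0]] Pnn[of 0] by simp
  have Phom: "P (r *\<^sub>R g) = r * P g" if r: "0 \<le> r" for r g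
  proof (cases "r = 0")
    case True then show ?thesis using P0 by simp
  next
    case False
    with r have rp: "r > 0" by simp
    have "P (r *\<^sub>R g) / r \<le> P g"
    proof (rule Pge)
      fix h assume "h \<in> S g"
      then have "r *\<^sub>R h \<in> S (r *\<^sub>R g)" by (simp add: Smem blinfun.scaleR_right)
      then have "P (r *\<^sub>R g) \<le> norm (r *\<^sub>R h)" by (rule Plow)
      then show "P (r *\<^sub>R g) / r \<le> norm h" using rp by (simp add: field_simps)
    qed
    moreover have "P g \<le> P (r *\<^sub>R g) / r"
    proof -
      have "P g * r \<le> P (r *\<^sub>R g)"
      proof (rule Pge)
        fix h assume "h \<in> S (r *\<^sub>R g)"
        then have "(1/r) *\<^sub>R h \<in> S g" using rp by (simp add: Smem blinfun.scaleR_right)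
        then have "P g \<le> norm ((1/r) *\<^sub>R h)" by (rule Plow)
        then show "P g * r \<le> norm h" using rp by (simp add: field_simps)
      qed
      then show ?thesis using rp by (simp add: field_simps)
    qed
    ultimately show ?thesis using rp by (simp add: field_simps)
  qed
  obtain \<phi> where lin: "linear \<phi>" and phiP: "\<And>x. \<phi> x \<le> P x" and phif: "\<phi> f = P f"
    using hahn_banach[of P f, OF Psub Phom] by blast
  have "S f = interp_set m nu y" using fM unfolding S_def interp_set_def by auto
  then have Pf: "P f = norm f" using nf P_def by simp
  have Pn: "P g \<le> norm g" for g using Plow[OF gS] .
  have phiabs: "\<bar>\<phi> g\<bar> \<le> norm g" for g
  proof -
    have "\<phi> (-g) = - \<phi> g" using lin by (simp add: linear_neg)
    then show ?thesis using phiP[of g] phiP[of "-g"] Pn[of g] Pn[of "-g"] by simp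
  qed
  have phiK: "\<phi> k = 0" if k: "\<forall>j\<in>{1..m}. blinfun_apply (nu j) k = 0" for k
  proof -
    have "0 \<in> S k" "0 \<in> S (-k)" using k by (auto simp: Smem blinfun.minus_right)
    then have "P k \<le> 0" "P (-k) \<le> 0" using Plow[of 0 k] Plow[of 0 "-k"] by simp_all
    moreover have "\<phi> (-k) = - \<phi> k" using lin by (simp add: linear_neg)
    ultimately show ?thesis using phiP[of k] phiP[of "-k"] by simp
  qed
  obtain e where e: "\<And>\<mu> \<nu>. \<mu> \<in> nu ` {1..m} \<Longrightarrow> \<nu> \<in> nu ` {1..m} \<Longrightarrow>
      blinfun_apply \<mu> (e \<nu>) = (if \<mu> = \<nu> then 1 else 0)"
    using dual_basis[OF _ ind] by blast
  define E where "E j = e (nu j)" for j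
  have E: "blinfun_apply (nu i) (E j) = (if i = j then 1 else 0)" if "i \<in> {1..m}" "j \<in> {1..m}" for i j
  proof -
    have "nu i = nu j \<longleftrightarrow> i = j" using inj that by (auto simp: inj_on_eq_iff)
    then show ?thesis using e[of "nu i" "nu j"] that unfolding E_def by simp
  qed
  define a where "a j = \<phi> (E j)" for j
  have phirep: "\<phi> g = (\<Sum>j=1..m. blinfun_apply (nu j) g * a j)" for g
  proof -
    define k where "k = g - (\<Sum>j=1..m. blinfun_apply (nu j) g *\<^sub>R E j)"
    have "blinfun_apply (nu i) k = 0" if i: "i \<in> {1..m}" for i
    proof -
      have "(\<Sum>j=1..m. blinfun_apply (nu j) g * blinfun_apply (nu i) (E j))
          = (\<Sum>j=1..m. if j = i then blinfun_apply (nu j) g else 0)"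
        using E[OF i] by (intro sum.cong) auto
      also have "\<dots> = blinfun_apply (nu i) g" using i by simp
      finally show ?thesis unfolding k_def
        by (simp add: blinfun.diff_right blinfun.sum_right blinfun.scaleR_right)
    qed
    then have "\<phi> k = 0" using phiK by blast
    moreover have "\<phi> k = \<phi> g - (\<Sum>j=1..m. blinfun_apply (nu j) g * a j)"
      unfolding k_def a_def using lin by (simp add: linear_diff linear_sum linear_scale)
    ultimately show ?thesis by simp
  qed
  define v0 where "v0 = (\<Sum>j=1..m. a j *\<^sub>R nu j)"
  have v0app: "blinfun_apply v0 g = \<phi> g" for g
    unfolding v0_def phirep by (simp add: blinfun.sum_left blinfun.scaleR_left mult.commute)
  have nv0: "norm v0 \<le> 1"
    by (rule norm_blinfun_bound) (use v0app phiabs in auto)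
  define c where "c j = norm f * a j" for j
  have vc: "(\<Sum>j=1..m. c j *\<^sub>R nu j) = norm f *\<^sub>R v0"
    unfolding c_def v0_def by (simp add: scaleR_sum_right)
  show ?thesis
  proof (cases "f = 0")
    case True
    have "0 \<in> subdifferential norm (\<Sum>j=1..m. c j *\<^sub>R nu j)"
      unfolding subdifferential_def vc True by simp
    moreover have "canon_embed f = norm (\<Sum>j=1..m. c j *\<^sub>R nu j) *\<^sub>R 0"
      using True by (auto intro!: blinfun_eqI simp: canon_apply)
    ultimately show ?thesis by blast
  next
    case False
    then have nfp: "norm f > 0" by simp
    have "norm f \<le> norm v0 * norm f"
      using norm_blinfun[of v0 f] v0app[of f] phif Pf by simp
    then have "norm v0 = 1" using nv0 nfp by simp
    then have gam: "norm (\<Sum>j=1..m. c j *\<^sub>R nu j) = norm f" unfolding vc by simp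
    define \<Phi> where "\<Phi> = (1 / norm f) *\<^sub>R canon_embed f"
    have "\<Phi> \<in> subdifferential norm (\<Sum>j=1..m. c j *\<^sub>R nu j)"
      unfolding subdifferential_def
    proof (rule CollectI, rule allI)
      fix g :: "'a \<Rightarrow>\<^sub>L real"
      have "blinfun_apply \<Phi> (g - (\<Sum>j=1..m. c j *\<^sub>R nu j)) = (blinfun_apply g f - norm f * \<phi> f) / norm f"
        unfolding \<Phi>_def vc by (simp add: blinfun.scaleR_left canon_apply blinfun.diff_left v0app)
      also have "\<dots> = blinfun_apply g f / norm f - norm f" using phif Pf nfp by (simp add: field_simps)
      also have "\<dots> \<le> norm g - norm f"
        using norm_blinfun[of g f] nfp by (simp add: field_simps)
      finally show "blinfun_apply \<Phi> (g - (\<Sum>j=1..m. c j *\<^sub>R nu j)) \<le> norm g - norm (\<Sum>j=1..m. c j *\<^sub>R nu j)"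
        using gam by simp
    qed
    moreover have "canon_embed f = norm (\<Sum>j=1..m. c j *\<^sub>R nu j) *\<^sub>R \<Phi>"
      unfolding gam \<Phi>_def using nfp by simp
    ultimately show ?thesis by blast
  qed
qed

theorem mainTheorem5:
  fixes nu :: "nat \<Rightarrow> ('a::banach \<Rightarrow>\<^sub>L real)" and m :: nat and y :: "nat \<Rightarrow> real" and f :: 'a
  assumes "inj_on nu {1..m}" and "independent (nu ` {1..m})"
  shows "is_mni_solution m nu y f \<longleftrightarrow>
    (f \<in> interp_set m nu y \<and>
     (\<exists>c :: nat \<Rightarrow> real.
        let \<gamma> = norm (\<Sum>j=1..m. c j *\<^sub>R nu j) in
        canon_embed f \<in> (\<lambda>\<Phi>. \<gamma> *\<^sub>R \<Phi>) ` subdifferential norm (\<Sum>j=1..m. c j *\<^sub>R nu j)))"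
proof
  assume sol: "is_mni_solution m nu y f"
  then show "f \<in> interp_set m nu y \<and>
     (\<exists>c :: nat \<Rightarrow> real.
        let \<gamma> = norm (\<Sum>j=1..m. c j *\<^sub>R nu j) in
        canon_embed f \<in> (\<lambda>\<Phi>. \<gamma> *\<^sub>R \<Phi>) ` subdifferential norm (\<Sum>j=1..m. c j *\<^sub>R nu j))"
    using forward[OF assms sol] unfolding is_mni_solution_def Let_def by blast
next
  assume h: "f \<in> interp_set m nu y \<and>
     (\<exists>c :: nat \<Rightarrow> real.
        let \<gamma> = norm (\<Sum>j=1..m. c j *\<^sub>R nu j) in
        canon_embed f \<in> (\<lambda>\<Phi>. \<gamma> *\<^sub>R \<Phi>) ` subdifferential norm (\<Sum>j=1..m. c j *\<^sub>R nu j))"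
  then obtain c \<Phi> where "\<Phi> \<in> subdifferential norm (\<Sum>j=1..m. c j *\<^sub>R nu j)"
    "canon_embed f = norm (\<Sum>j=1..m. c j *\<^sub>R nu j) *\<^sub>R \<Phi>"
    unfolding Let_def by blast
  then show "is_mni_solution m nu y f" using backward h by blast
qed

end
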